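(* Let $m, n \in \mathbb N$. If $A, B$ are $2n\times 2m$ complex matrices such that $A(H \otimes I_m) = (H \otimes I_n)B$ for all $H \in \mathcal{IH}_2^0$, then $A = B = I_2 \otimes T$ for some $n \times m$ complex matrix $T$.
   Context: $\mathcal{IH}_2^0$ is the set of $2\times 2$ complex matrices that are hermitian, unitary and of trace zero; $\otimes$ is the Kronecker product and $I_n$ the identity matrix. *)

theory Defs
  imports Complex_Main "Jordan_Normal_Form.Matrix"
begin

definition cadj :: "complex mat \<Rightarrow> complex mat" where
  "cadj A = mat (dim_col A) (dim_row A) (\<lambda>(i,j). cnj (A $$ (j,i)))"

definition mtrace :: "complex mat \<Rightarrow> complex" where
  "mtrace A = (\<Sum>i<dim_row A. A $$ (i,i))"

definition kron :: "complex mat \<Rightarrow> complex mat \<Rightarrow> complex mat" where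
  "kron A B = mat (dim_row A * dim_row B) (dim_col A * dim_col B)
     (\<lambda>(i,j). A $$ (i div dim_row B, j div dim_col B) * B $$ (i mod dim_row B, j mod dim_col B))"

definition IH20 :: "complex mat set" where
  "IH20 = {H. H \<in> carrier_mat 2 2 \<and> cadj H = H \<and> cadj H * H = 1\<^sub>m 2
             \<and> H * cadj H = 1\<^sub>m 2 \<and> mtrace H = 0}"

end

theory Submission
  imports Defs
begin

lemma less2: "(i::nat) < 2 \<longleftrightarrow> i = 0 \<or> i = 1" by auto

lemma rmul_kron:
  assumes A: "A \<in> carrier_mat r (2*m)" and H: "H \<in> carrier_mat 2 2"
    and i: "i < r" and q: "q < m" and b: "b < 2"
  shows "(A * kron H (1\<^sub>m m)) $$ (i, b*m+q) = A$$(i,q)*H$$(0,b) + A$$(i,m+q)*H$$(1,b)"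
proof -
  have bm: "b*m+q < 2*m" using b q less2[of b] by auto
  let ?f = "\<lambda>k. A$$(i,k) * (H$$(k div m, b) * (if k mod m = q then 1 else 0))"
  have "(A * kron H (1\<^sub>m m)) $$ (i, b*m+q) = (\<Sum>k\<in>{0..<2*m}. ?f k)"
    using A H i bm q unfolding kron_def
    by (auto simp: scalar_prod_def intro!: sum.cong)
  also have "\<dots> = (\<Sum>k\<in>{0..<m}. ?f k) + (\<Sum>k\<in>{m..<m+m}. ?f k)"
    by (subst sum.atLeastLessThan_concat) (auto simp: mult_2)
  also have "(\<Sum>k\<in>{m..<m+m}. ?f k) = (\<Sum>k\<in>{0..<m}. ?f (k+m))"
    using sum.shift_bounds_nat_ivl[of ?f 0 m m] by simp
  also have "(\<Sum>k\<in>{0..<m}. ?f (k+m)) = (\<Sum>k\<in>{0..<m}. if k = q then A$$(i,m+q)*H$$(1,b) else 0)"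
    by (rule sum.cong) (auto simp: add.commute)
  also have "(\<Sum>k\<in>{0..<m}. ?f k) = (\<Sum>k\<in>{0..<m}. if k = q then A$$(i,q)*H$$(0,b) else 0)"
    by (rule sum.cong) auto
  finally show ?thesis using q by simp
qed

lemma lmul_kron:
  assumes B: "B \<in> carrier_mat (2*n) c" and H: "H \<in> carrier_mat 2 2"
    and j: "j < c" and p: "p < n" and a: "a < 2"
  shows "(kron H (1\<^sub>m n) * B) $$ (a*n+p, j) = H$$(a,0)*B$$(p,j) + H$$(a,1)*B$$(n+p,j)"
proof -
  have an: "a*n+p < 2*n" using a p less2[of a] by auto
  let ?f = "\<lambda>k. (H$$(a, k div n) * (if p = k mod n then 1 else 0)) * B$$(k,j)"
  have "(kron H (1\<^sub>m n) * B) $$ (a*n+p, j) = (\<Sum>k\<in>{0..<2*n}. ?f k)"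
    using B H j an p unfolding kron_def
    by (auto simp: scalar_prod_def intro!: sum.cong)
  also have "\<dots> = (\<Sum>k\<in>{0..<n}. ?f k) + (\<Sum>k\<in>{n..<n+n}. ?f k)"
    by (subst sum.atLeastLessThan_concat) (auto simp: mult_2)
  also have "(\<Sum>k\<in>{n..<n+n}. ?f k) = (\<Sum>k\<in>{0..<n}. ?f (k+n))"
    using sum.shift_bounds_nat_ivl[of ?f 0 n n] by simp
  also have "(\<Sum>k\<in>{0..<n}. ?f (k+n)) = (\<Sum>k\<in>{0..<n}. if k = p then H$$(a,1)*B$$(n+p,j) else 0)"
    by (rule sum.cong) (auto simp: add.commute)
  also have "(\<Sum>k\<in>{0..<n}. ?f k) = (\<Sum>k\<in>{0..<n}. if k = p then H$$(a,0)*B$$(p,j) else 0)"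
    by (rule sum.cong) auto
  finally show ?thesis using p by simp
qed

definition "PZ = mat 2 2 (\<lambda>(i,j). if i=j then (if i=0 then 1 else -1) else (0::complex))"
definition "PX = mat 2 2 (\<lambda>(i,j). if i=j then 0 else (1::complex))"
definition "PY = mat 2 2 (\<lambda>(i,j). if i=j then 0 else if i=0 then -\<i> else \<i>)"


lemma sum2: "(\<Sum>k\<in>{0..<2::nat}. f k) = f 0 + f 1"
  by (simp add: numeral_2_eq_2)

lemma PZ: "PZ \<in> IH20"
  unfolding IH20_def PZ_def
  by (auto simp: numeral_2_eq_2 lessThan_Suc cadj_def mtrace_def sum2 scalar_prod_def less2 intro!: eq_matI)
lemma PX: "PX \<in> IH20"
  unfolding IH20_def PX_def
  by (auto simp: cadj_def mtrace_def sum2 scalar_prod_def less2 intro!: eq_matI)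
lemma PY: "PY \<in> IH20"
  unfolding IH20_def PY_def
  by (auto simp: cadj_def mtrace_def sum2 scalar_prod_def less2 intro!: eq_matI)

lemma key:
  fixes m n :: nat and A B :: "complex mat"
  assumes A: "A \<in> carrier_mat (2 * n) (2 * m)"
    and B: "B \<in> carrier_mat (2 * n) (2 * m)"
    and E: "\<forall>H \<in> IH20. A * kron H (1\<^sub>m m) = kron H (1\<^sub>m n) * B"
    and p: "p < n" and q: "q < m"
  shows "A$$(p,m+q) = 0 \<and> A$$(n+p,q) = 0 \<and> A$$(n+p,m+q) = A$$(p,q)
       \<and> B$$(p,q) = A$$(p,q) \<and> B$$(p,m+q) = 0 \<and> B$$(n+p,q) = 0 \<and> B$$(n+p,m+q) = A$$(p,q)"
proof -
  have e: "A$$(a*n+p, q)*H$$(0,b) + A$$(a*n+p,m+q)*H$$(1,b)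
      = H$$(a,0)*B$$(p,b*m+q)+H$$(a,1)*B$$(n+p,b*m+q)"
    if H: "H \<in> IH20" and a: "a < 2" and b: "b < 2" for H a b
  proof -
    have Hc: "H \<in> carrier_mat 2 2" using H by (simp add: IH20_def)
    have an: "a*n+p < 2*n" using a p less2[of a] by auto
    have bm: "b*m+q < 2*m" using b q less2[of b] by auto
    have "(A * kron H (1\<^sub>m m)) $$ (a*n+p, b*m+q) = (kron H (1\<^sub>m n) * B) $$ (a*n+p, b*m+q)"
      using E H by simp
    then show ?thesis
      using rmul_kron[OF A Hc an q b] lmul_kron[OF B Hc bm p a] by simp
  qed
  note z00 = e[OF PZ, of 0 0] and z01 = e[OF PZ, of 0 1] and z10 = e[OF PZ, of 1 0] and z11 = e[OF PZ, of 1 1]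
  note x00 = e[OF PX, of 0 0] and x01 = e[OF PX, of 0 1] and x10 = e[OF PX, of 1 0] and x11 = e[OF PX, of 1 1]
  note y00 = e[OF PY, of 0 0] and y01 = e[OF PY, of 0 1] and y10 = e[OF PY, of 1 0] and y11 = e[OF PY, of 1 1]
  note all = z00 z01 z10 z11 x00 x01 x10 x11 y00 y01 y10 y11
  show ?thesis using all by (simp add: PZ_def PX_def PY_def)
qed

lemma blk:
  fixes m n :: nat and A B :: "complex mat"
  assumes A: "A \<in> carrier_mat (2 * n) (2 * m)"
    and B: "B \<in> carrier_mat (2 * n) (2 * m)"
    and E: "\<forall>H \<in> IH20. A * kron H (1\<^sub>m m) = kron H (1\<^sub>m n) * B"
    and p: "p < n" and q: "q < m" and a: "a < 2" and b: "b < 2"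
  shows "A$$(a*n+p, b*m+q) = (if a = b then A$$(p,q) else 0)
       \<and> B$$(a*n+p, b*m+q) = (if a = b then A$$(p,q) else 0)"
  using key[OF A B E p q] a b less2[of a] less2[of b] by auto

theorem lemma3p3:
  fixes m n :: nat and A B :: "complex mat"
  assumes "A \<in> carrier_mat (2 * n) (2 * m)"
    and "B \<in> carrier_mat (2 * n) (2 * m)"
    and "\<forall>H \<in> IH20. A * kron H (1\<^sub>m m) = kron H (1\<^sub>m n) * B"
  shows "\<exists>T \<in> carrier_mat n m. A = kron (1\<^sub>m 2) T \<and> B = kron (1\<^sub>m 2) T"
proof -
  define T where "T = mat n m (\<lambda>(p,q). A$$(p,q))"
  have gen: "C $$ (i,j) = kron (1\<^sub>m 2) T $$ (i,j)"
    if C: "\<And>p q a b. p < n \<Longrightarrow> q < m \<Longrightarrow> a < 2 \<Longrightarrow> b < 2 \<Longrightarrow>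
        C$$(a*n+p, b*m+q) = (if a = b then A$$(p,q) else 0)"
      and i: "i < 2*n" and j: "j < 2*m" for C i j
  proof -
    have n0: "n > 0" and m0: "m > 0" using i j by auto
    have ia: "i div n < 2" using i by (simp add: less_mult_imp_div_less)
    have jb: "j div m < 2" using j by (simp add: less_mult_imp_div_less)
    have "C $$ (i,j) = C $$ ((i div n)*n + i mod n, (j div m)*m + j mod m)" by simp
    also have "\<dots> = (if i div n = j div m then A$$(i mod n, j mod m) else 0)"
      using C[of "i mod n" "j mod m" "i div n" "j div m"] n0 m0 ia jb by simp
    also have "\<dots> = kron (1\<^sub>m 2) T $$ (i,j)"
      using i j n0 m0 ia jb unfolding kron_def T_def by auto
    finally show ?thesis .
  qed
  have dk: "kron (1\<^sub>m 2) T \<in> carrier_mat (2*n) (2*m)" by (simp add: kron_def T_def)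
  have "A = kron (1\<^sub>m 2) T"
  proof (rule eq_matI)
    fix i j assume "i < dim_row (kron (1\<^sub>m 2) T)" "j < dim_col (kron (1\<^sub>m 2) T)"
    then have i: "i < 2*n" and j: "j < 2*m" using dk by auto
    show "A $$ (i,j) = kron (1\<^sub>m 2) T $$ (i,j)"
      by (rule gen[OF _ i j]) (use blk[OF assms] in blast)
  qed (use assms dk in auto)
  moreover have "B = kron (1\<^sub>m 2) T"
  proof (rule eq_matI)
    fix i j assume "i < dim_row (kron (1\<^sub>m 2) T)" "j < dim_col (kron (1\<^sub>m 2) T)"
    then have i: "i < 2*n" and j: "j < 2*m" using dk by auto
    show "B $$ (i,j) = kron (1\<^sub>m 2) T $$ (i,j)"
      by (rule gen[OF _ i j]) (use blk[OF assms] in blast)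
  qed (use assms dk in auto)
  ultimately show ?thesis by (auto simp: T_def)
qed

end
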